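(* Let $G$ be a finite group, $s \in G^{\#}$ and $c$ a positive integer. Let $\{x_1,\ldots,x_k\}$ be a set of representatives of the conjugacy classes of elements of prime order in $G$. Then \[ Q(G,s,c) \leqslant \sum_{i=1}^{k} |x_i^G| \left( \sum_{H \in \mathcal{M}(G,s)} {\rm fpr}(x_i,G/H) \right)^c. \]
   Context: $G^{\#}$ is the set of non-identity elements of $G$. A subset $S\subseteq G^{\#}$ is a total dominating set for the generating graph of $G$ if for every $g\in G^{\#}$ there exists $z\in S$ with $G=\langle g,z\rangle$. $Q(G,s,c)$ is the probability that for a uniformly random $c$-tuple $(z_1,\ldots,z_c)$ of conjugates of $s$, the set $\{z_1,\ldots,z_c\}$ is not a total dominating set. $\mathcal{M}(G,s)$ is the set of maximal subgroups of $G$ containing $s$. For $x\in G$ and $H<G$, ${\rm fpr}(x,G/H)=|x^G\cap H|/|x^G|$ (the fixed point ratio of $x$ on $G/H$). *)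

theory Defs
  imports Complex_Main "HOL-Algebra.Algebra" "HOL-Library.FuncSet"
begin

definition conj_class :: "('a, 'b) monoid_scheme \<Rightarrow> 'a \<Rightarrow> 'a set" where
  "conj_class G x = {g \<otimes>\<^bsub>G\<^esub> x \<otimes>\<^bsub>G\<^esub> inv\<^bsub>G\<^esub> g | g. g \<in> carrier G}"

definition nonid :: "('a, 'b) monoid_scheme \<Rightarrow> 'a set" where
  "nonid G = carrier G - {\<one>\<^bsub>G\<^esub>}"

text \<open>Total dominating set of the generating graph.\<close>
definition total_dominating :: "('a, 'b) monoid_scheme \<Rightarrow> 'a set \<Rightarrow> bool" where
  "total_dominating G S \<longleftrightarrow> S \<subseteq> nonid G \<and>
     (\<forall>g \<in> nonid G. \<exists>z \<in> S. generate G {g, z} = carrier G)"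

text \<open>Q(G,s,c): probability that a uniformly random c-tuple of conjugates of s
  (tuples modelled as extensional functions on {..<c}) is not a total dominating set.\<close>
definition Qprob :: "('a, 'b) monoid_scheme \<Rightarrow> 'a \<Rightarrow> nat \<Rightarrow> real" where
  "Qprob G s c =
     real (card {f \<in> {..<c} \<rightarrow>\<^sub>E conj_class G s. \<not> total_dominating G (f ` {..<c})})
     / real (card ({..<c} \<rightarrow>\<^sub>E conj_class G s))"

definition maximal_subgroup :: "'a set \<Rightarrow> ('a, 'b) monoid_scheme \<Rightarrow> bool" where
  "maximal_subgroup H G \<longleftrightarrow> subgroup H G \<and> H \<noteq> carrier G \<and>
     (\<forall>K. subgroup K G \<and> H \<subseteq> K \<longrightarrow> K = H \<or> K = carrier G)"

definition max_over :: "('a, 'b) monoid_scheme \<Rightarrow> 'a \<Rightarrow> 'a set set" where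
  "max_over G s = {H. maximal_subgroup H G \<and> s \<in> H}"

definition fpr :: "('a, 'b) monoid_scheme \<Rightarrow> 'a \<Rightarrow> 'a set \<Rightarrow> real" where
  "fpr G x H = real (card (conj_class G x \<inter> H)) / real (card (conj_class G x))"

end

theory Submission
  imports Defs
begin

context group
begin

lemma cancel_l': "a \<in> carrier G \<Longrightarrow> g \<in> carrier G \<Longrightarrow> inv g \<otimes> (g \<otimes> a) = a"
  by (simp add: m_assoc[symmetric])

lemma cancel_r': "a \<in> carrier G \<Longrightarrow> g \<in> carrier G \<Longrightarrow> a \<otimes> inv g \<otimes> g = a"
  by (simp add: m_assoc)

lemma conj_mem: "a \<in> carrier G \<Longrightarrow> g \<in> carrier G \<Longrightarrow> g \<otimes> a \<otimes> inv g \<in> conj_class G a"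
  unfolding conj_class_def by blast

lemma conj_class_sub: "a \<in> carrier G \<Longrightarrow> conj_class G a \<subseteq> carrier G"
  unfolding conj_class_def by auto

lemma conj_class_self: "a \<in> carrier G \<Longrightarrow> a \<in> conj_class G a"
  using conj_mem[of a \<one>] by simp

lemma conj_compose:
  assumes "a \<in> carrier G" "g \<in> carrier G" "h \<in> carrier G"
  shows "h \<otimes> (g \<otimes> a \<otimes> inv g) \<otimes> inv h = (h \<otimes> g) \<otimes> a \<otimes> inv (h \<otimes> g)"
  using assms by (simp add: inv_mult_group m_assoc)

lemma conj_class_eq:
  assumes x: "x \<in> carrier G" and y: "y \<in> conj_class G x"
  shows "conj_class G y = conj_class G x"
proof -
  obtain g where g: "g \<in> carrier G" and yd: "y = g \<otimes> x \<otimes> inv g"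
    using y unfolding conj_class_def by blast
  show ?thesis
  proof
    show "conj_class G y \<subseteq> conj_class G x"
    proof
      fix w assume "w \<in> conj_class G y"
      then obtain h where h: "h \<in> carrier G" and w: "w = h \<otimes> y \<otimes> inv h"
        unfolding conj_class_def by blast
      have "w = (h \<otimes> g) \<otimes> x \<otimes> inv (h \<otimes> g)"
        using conj_compose[OF x g h] w yd by simp
      then show "w \<in> conj_class G x" using conj_mem[OF x, of "h \<otimes> g"] g h by simp
    qed
  next
    show "conj_class G x \<subseteq> conj_class G y"
    proof
      fix w assume "w \<in> conj_class G x"
      then obtain h where h: "h \<in> carrier G" and w: "w = h \<otimes> x \<otimes> inv h"
        unfolding conj_class_def by blast
      have xy: "x = inv g \<otimes> y \<otimes> inv (inv g)"
        using yd g x by (simp add: m_assoc[symmetric] cancel_r')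
      have yc: "y \<in> carrier G" using yd g x by simp
      have "w = (h \<otimes> inv g) \<otimes> y \<otimes> inv (h \<otimes> inv g)"
        using conj_compose[OF yc _ h, of "inv g"] w xy g by simp
      then show "w \<in> conj_class G y" using conj_mem[OF yc, of "h \<otimes> inv g"] g h by simp
    qed
  qed
qed

lemma conj_pow:
  assumes "x \<in> carrier G" "g \<in> carrier G"
  shows "(g \<otimes> x \<otimes> inv g) [^] (n::nat) = g \<otimes> (x [^] n) \<otimes> inv g"
proof (induction n)
  case 0 then show ?case using assms by (simp add: m_assoc[symmetric])
next
  case (Suc n)
  have "(g \<otimes> x \<otimes> inv g) [^] Suc n = (g \<otimes> (x [^] n) \<otimes> inv g) \<otimes> (g \<otimes> x \<otimes> inv g)"
    using Suc by simp
  also have "\<dots> = g \<otimes> (x [^] n \<otimes> x) \<otimes> inv g"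
    using assms by (simp add: m_assoc cancel_l')
  also have "\<dots> = g \<otimes> (x [^] Suc n) \<otimes> inv g" by simp
  finally show ?case .
qed

lemma ord_conj:
  assumes "x \<in> carrier G" "g \<in> carrier G"
  shows "ord (g \<otimes> x \<otimes> inv g) = ord x"
proof -
  have "\<And>n. (g \<otimes> x \<otimes> inv g) [^] (n::nat) = \<one> \<longleftrightarrow> x [^] n = \<one>"
  proof -
    fix n :: nat
    have "g \<otimes> (x [^] n) \<otimes> inv g = \<one> \<longleftrightarrow> x [^] n = \<one>"
      using assms by (metis conjugation_is_inj inv_closed nat_pow_closed one_closed r_inv r_one)
    then show "(g \<otimes> x \<otimes> inv g) [^] n = \<one> \<longleftrightarrow> x [^] n = \<one>" using conj_pow[OF assms] by simp
  qed
  then show ?thesis using assms ord_unique pow_eq_id by simp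
qed

lemma ord_conj_class: "x \<in> carrier G \<Longrightarrow> y \<in> conj_class G x \<Longrightarrow> ord y = ord x"
  unfolding conj_class_def using ord_conj by auto

lemma subgroup_pow_closed:
  assumes "subgroup K G" "x \<in> K"
  shows "x [^] (n::nat) \<in> K"
proof (induction n)
  case 0 then show ?case using assms subgroup.one_closed by simp
next
  case (Suc n)
  have "x \<in> carrier G" using assms subgroup.subset by blast
  then have "x [^] Suc n = x [^] n \<otimes> x" by simp
  then show ?case using Suc assms subgroup.m_closed by metis
qed

lemma conj_subgroup:
  assumes K: "subgroup K G" and a: "a \<in> carrier G"
  shows "subgroup ((\<lambda>k. a \<otimes> k \<otimes> inv a) ` K) G"
proof (rule subgroupI)
  have Kc: "K \<subseteq> carrier G" using K subgroup.subset by blast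
  show "(\<lambda>k. a \<otimes> k \<otimes> inv a) ` K \<subseteq> carrier G" using Kc a by auto
  show "(\<lambda>k. a \<otimes> k \<otimes> inv a) ` K \<noteq> {}" using K subgroup.one_closed by blast
  fix u assume "u \<in> (\<lambda>k. a \<otimes> k \<otimes> inv a) ` K"
  then obtain k where k: "k \<in> K" and u: "u = a \<otimes> k \<otimes> inv a" by blast
  have kc: "k \<in> carrier G" using k Kc by blast
  have "inv u = inv (inv a) \<otimes> inv (a \<otimes> k)"
    using u a kc by (simp only: inv_mult_group m_closed inv_closed)
  also have "\<dots> = a \<otimes> (inv k \<otimes> inv a)"
    using a kc by (simp add: inv_mult_group)
  also have "\<dots> = a \<otimes> inv k \<otimes> inv a"
    using a kc by (simp add: m_assoc)
  finally have e: "inv u = a \<otimes> inv k \<otimes> inv a" .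
  have ik: "inv k \<in> K" using subgroup.m_inv_closed[OF K k] .
  show "inv u \<in> (\<lambda>k. a \<otimes> k \<otimes> inv a) ` K" by (rule rev_image_eqI[where f="\<lambda>k. a \<otimes> k \<otimes> inv a", OF ik e])
next
  have Kc: "K \<subseteq> carrier G" using K subgroup.subset by blast
  fix u v assume "u \<in> (\<lambda>k. a \<otimes> k \<otimes> inv a) ` K" "v \<in> (\<lambda>k. a \<otimes> k \<otimes> inv a) ` K"
  then obtain k l where k: "k \<in> K" and u: "u = a \<otimes> k \<otimes> inv a"
    and l: "l \<in> K" and v: "v = a \<otimes> l \<otimes> inv a" by blast
  have kc: "k \<in> carrier G" and lc: "l \<in> carrier G" using k l Kc by auto
  have e: "u \<otimes> v = a \<otimes> (k \<otimes> l) \<otimes> inv a"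
    using u v a kc lc by (simp add: m_assoc cancel_l')
  have kl: "k \<otimes> l \<in> K" using subgroup.m_closed[OF K k l] .
  show "u \<otimes> v \<in> (\<lambda>k. a \<otimes> k \<otimes> inv a) ` K" by (rule rev_image_eqI[where f="\<lambda>k. a \<otimes> k \<otimes> inv a", OF kl e])
qed

lemma conj_subgroup_proper:
  assumes K: "subgroup K G" and a: "a \<in> carrier G" and ne: "K \<noteq> carrier G"
  shows "(\<lambda>k. a \<otimes> k \<otimes> inv a) ` K \<noteq> carrier G"
proof
  assume eq: "(\<lambda>k. a \<otimes> k \<otimes> inv a) ` K = carrier G"
  have Kc: "K \<subseteq> carrier G" using K subgroup.subset by blast
  have "carrier G \<subseteq> K"
  proof
    fix b assume b: "b \<in> carrier G"
    have c: "a \<otimes> b \<otimes> inv a \<in> carrier G" using a b by (intro m_closed inv_closed)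
    have "a \<otimes> b \<otimes> inv a \<in> (\<lambda>k. a \<otimes> k \<otimes> inv a) ` K" unfolding eq using c .
    then obtain k where e: "a \<otimes> b \<otimes> inv a = a \<otimes> k \<otimes> inv a" and k: "k \<in> K"
      by (rule imageE)
    have kc: "k \<in> carrier G" using k Kc by (rule subsetD[rotated])
    have "b = k" using conjugation_is_inj[OF a b kc e] .
    then show "b \<in> K" using k by simp
  qed
  then show False using Kc ne by blast
qed

lemma exists_maximal:
  assumes fin: "finite (carrier G)" and K: "subgroup K G" and ne: "K \<noteq> carrier G"
  shows "\<exists>M. maximal_subgroup M G \<and> K \<subseteq> M"
proof -
  define S where "S = {L. subgroup L G \<and> L \<noteq> carrier G \<and> K \<subseteq> L}"
  have "S \<subseteq> Pow (carrier G)" unfolding S_def using subgroup.subset by blast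
  then have finS: "finite S" using fin finite_Pow_iff finite_subset by metis
  have KS: "K \<in> S" using K ne unfolding S_def by blast
  have "\<exists>m\<in>S. K \<le> m \<and> (\<forall>b\<in>S. m \<le> b \<longrightarrow> m = b)"
    by (rule finite_has_maximal2[OF finS KS])
  then obtain m where mS: "m \<in> S" and mK: "K \<subseteq> m" and mx: "\<forall>b\<in>S. m \<subseteq> b \<longrightarrow> m = b"
    by blast
  have m: "subgroup m G" "m \<noteq> carrier G" using mS unfolding S_def by auto
  have "maximal_subgroup m G"
    unfolding maximal_subgroup_def
  proof (intro conjI allI impI)
    show "subgroup m G" "m \<noteq> carrier G" using m by auto
    fix L assume L: "subgroup L G \<and> m \<subseteq> L"
    show "L = m \<or> L = carrier G"
    proof (cases "L = carrier G")
      case False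
      then have "L \<in> S" using L mK unfolding S_def by blast
      then show ?thesis using mx L by blast
    qed simp
  qed
  then show ?thesis using mK by blast
qed

lemma prime_order_power:
  assumes fin: "finite (carrier G)" and g: "g \<in> carrier G" and ne: "g \<noteq> \<one>"
  shows "\<exists>n::nat. Factorial_Ring.prime (ord (g [^] n))"
proof -
  have "ord g \<ge> 1" using ord_ge_1[OF fin g] .
  moreover have "ord g \<noteq> 1" using ord_eq_1[OF g] ne by simp
  ultimately have o2: "ord g \<noteq> 1" "ord g \<noteq> 0" by auto
  obtain p :: nat where p: "Factorial_Ring.prime p" "p dvd ord g" using prime_factor_nat[OF o2(1)] by blast
  obtain q where q: "ord g = p * q" using p(2) by blast
  have q0: "q \<noteq> 0" using q o2 by auto
  have qd: "q dvd ord g" using q by simp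
  have "ord (g [^] q) = ord g div q" using ord_pow[OF g qd q0] .
  also have "\<dots> = p" using q q0 by simp
  finally show ?thesis using p by metis
qed

lemma card_fiber:
  assumes fin: "finite (carrier G)" and a: "a \<in> carrier G" and z: "z \<in> conj_class G a"
  shows "card {h \<in> carrier G. h \<otimes> a \<otimes> inv h = z} = card {h \<in> carrier G. h \<otimes> a \<otimes> inv h = a}"
proof -
  obtain g where g: "g \<in> carrier G" and zd: "z = g \<otimes> a \<otimes> inv g"
    using z unfolding conj_class_def by blast
  let ?Z = "{h \<in> carrier G. h \<otimes> a \<otimes> inv h = a}"
  have eq: "{h \<in> carrier G. h \<otimes> a \<otimes> inv h = z} = (\<lambda>h. g \<otimes> h) ` ?Z"
  proof
    show "(\<lambda>h. g \<otimes> h) ` ?Z \<subseteq> {h \<in> carrier G. h \<otimes> a \<otimes> inv h = z}"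
    proof
      fix u assume "u \<in> (\<lambda>h. g \<otimes> h) ` ?Z"
      then obtain h where h: "h \<in> carrier G" "h \<otimes> a \<otimes> inv h = a" and u: "u = g \<otimes> h" by blast
      have "u \<otimes> a \<otimes> inv u = g \<otimes> (h \<otimes> a \<otimes> inv h) \<otimes> inv g"
        using conj_compose[OF a h(1) g] u by simp
      then show "u \<in> {h \<in> carrier G. h \<otimes> a \<otimes> inv h = z}" using h u g zd by simp
    qed
  next
    show "{h \<in> carrier G. h \<otimes> a \<otimes> inv h = z} \<subseteq> (\<lambda>h. g \<otimes> h) ` ?Z"
    proof
      fix u assume u: "u \<in> {h \<in> carrier G. h \<otimes> a \<otimes> inv h = z}"
      let ?h = "inv g \<otimes> u"
      have uc: "u \<in> carrier G" using u by blast
      have hc: "?h \<in> carrier G" using uc g by simp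
      have "?h \<otimes> a \<otimes> inv ?h = inv g \<otimes> (u \<otimes> a \<otimes> inv u) \<otimes> inv (inv g)"
        using conj_compose[OF a uc, of "inv g"] g by simp
      also have "\<dots> = inv g \<otimes> (g \<otimes> a \<otimes> inv g) \<otimes> inv (inv g)" using u zd by simp
      also have "\<dots> = (inv g \<otimes> g) \<otimes> a \<otimes> inv (inv g \<otimes> g)"
        using conj_compose[OF a g, of "inv g"] g by simp
      also have "\<dots> = a" using g a by simp
      finally have "?h \<in> ?Z" using hc by blast
      moreover have "u = g \<otimes> ?h" using g uc by (simp add: m_assoc[symmetric])
      ultimately show "u \<in> (\<lambda>h. g \<otimes> h) ` ?Z" by blast
    qed
  qed
  have inj: "inj_on (\<lambda>h. g \<otimes> h) ?Z"
  proof (rule inj_onI)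
    fix u v assume "u \<in> ?Z" "v \<in> ?Z" "g \<otimes> u = g \<otimes> v"
    then show "u = v" using g l_cancel by blast
  qed
  show ?thesis unfolding eq using card_image[OF inj] .
qed

lemma card_preimage:
  assumes fin: "finite (carrier G)" and a: "a \<in> carrier G" and D: "D \<subseteq> conj_class G a"
  shows "card {h \<in> carrier G. h \<otimes> a \<otimes> inv h \<in> D} = card D * card {h \<in> carrier G. h \<otimes> a \<otimes> inv h = a}"
proof -
  let ?F = "\<lambda>z. {h \<in> carrier G. h \<otimes> a \<otimes> inv h = z}"
  have finD: "finite D" using D conj_class_sub[OF a] fin finite_subset by metis
  have eq: "{h \<in> carrier G. h \<otimes> a \<otimes> inv h \<in> D} = (\<Union>z\<in>D. ?F z)" by blast
  have "card (\<Union>z\<in>D. ?F z) = (\<Sum>z\<in>D. card (?F z))"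
  proof (rule card_UN_disjoint[OF finD])
    show "\<forall>i\<in>D. finite (?F i)" using fin by simp
    show "\<forall>i\<in>D. \<forall>j\<in>D. i \<noteq> j \<longrightarrow> ?F i \<inter> ?F j = {}" by blast
  qed
  then have "card {h \<in> carrier G. h \<otimes> a \<otimes> inv h \<in> D} = (\<Sum>z\<in>D. card (?F z))"
    using eq by simp
  also have "\<dots> = (\<Sum>z\<in>D. card (?F a))"
    using card_fiber[OF fin a] D by (intro sum.cong) auto
  finally show ?thesis by simp
qed

lemma finite_max_over:
  assumes fin: "finite (carrier G)"
  shows "finite (max_over G s)"
proof -
  have "max_over G s \<subseteq> Pow (carrier G)"
    unfolding max_over_def maximal_subgroup_def using subgroup.subset by blast
  then show ?thesis using fin finite_Pow_iff finite_subset by metis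
qed

lemma prob_bound:
  assumes fin: "finite (carrier G)" and s: "s \<in> carrier G" and y: "y \<in> carrier G"
  shows "real (card {z \<in> conj_class G s. \<exists>K. subgroup K G \<and> K \<noteq> carrier G \<and> y \<in> K \<and> z \<in> K})
           / real (card (conj_class G s)) \<le> (\<Sum>H\<in>max_over G s. fpr G y H)"
proof -
  define D where "D = {z \<in> conj_class G s. \<exists>K. subgroup K G \<and> K \<noteq> carrier G \<and> y \<in> K \<and> z \<in> K}"
  define U where "U = \<Union>(max_over G s)"
  define Zs where "Zs = {h \<in> carrier G. h \<otimes> s \<otimes> inv h = s}"
  define Zy where "Zy = {h \<in> carrier G. h \<otimes> y \<otimes> inv h = y}"
  define yG where "yG = conj_class G y"
  have S1: "{h \<in> carrier G. h \<otimes> s \<otimes> inv h \<in> D} \<subseteq> {h \<in> carrier G. inv h \<otimes> y \<otimes> h \<in> U}"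
  proof
    fix h assume "h \<in> {h \<in> carrier G. h \<otimes> s \<otimes> inv h \<in> D}"
    then have h: "h \<in> carrier G" and hD: "h \<otimes> s \<otimes> inv h \<in> D" by auto
    obtain K where K: "subgroup K G" "K \<noteq> carrier G" "y \<in> K" "h \<otimes> s \<otimes> inv h \<in> K"
      using hD unfolding D_def by blast
    have ih: "inv h \<in> carrier G" using h by simp
    let ?K' = "(\<lambda>k. inv h \<otimes> k \<otimes> inv (inv h)) ` K"
    have K'sub: "subgroup ?K' G" using conj_subgroup[OF K(1) ih] .
    have K'ne: "?K' \<noteq> carrier G" using conj_subgroup_proper[OF K(1) ih K(2)] .
    obtain M where M: "maximal_subgroup M G" "?K' \<subseteq> M"
      using exists_maximal[OF fin K'sub K'ne] by blast
    have "inv h \<otimes> y \<otimes> inv (inv h) \<in> ?K'" using K(3) by blast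
    then have "inv h \<otimes> y \<otimes> inv (inv h) \<in> M" using M(2) by blast
    then have yM: "inv h \<otimes> y \<otimes> h \<in> M" using h by simp
    have "inv h \<otimes> (h \<otimes> s \<otimes> inv h) \<otimes> inv (inv h) \<in> ?K'" using K(4) by blast
    moreover have "inv h \<otimes> (h \<otimes> s \<otimes> inv h) \<otimes> inv (inv h) = s"
    proof -
      have "inv h \<otimes> (h \<otimes> s \<otimes> inv h) \<otimes> inv (inv h) = (inv h \<otimes> h) \<otimes> s \<otimes> inv (inv h \<otimes> h)"
        using conj_compose[OF s h ih] .
      then show ?thesis using h s by simp
    qed
    ultimately have "s \<in> M" using M(2) by auto
    then have "M \<in> max_over G s" unfolding max_over_def using M(1) by blast
    then show "h \<in> {h \<in> carrier G. inv h \<otimes> y \<otimes> h \<in> U}" using yM h unfolding U_def by blast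
  qed
  have S2: "card {h \<in> carrier G. inv h \<otimes> y \<otimes> h \<in> U} = card {h \<in> carrier G. h \<otimes> y \<otimes> inv h \<in> U}"
  proof -
    have eqA: "{h \<in> carrier G. inv h \<otimes> y \<otimes> h \<in> U} = (\<lambda>x. inv x) ` {h \<in> carrier G. h \<otimes> y \<otimes> inv h \<in> U}"
    proof
      show "{h \<in> carrier G. inv h \<otimes> y \<otimes> h \<in> U} \<subseteq> (\<lambda>x. inv x) ` {h \<in> carrier G. h \<otimes> y \<otimes> inv h \<in> U}"
      proof
        fix h assume "h \<in> {h \<in> carrier G. inv h \<otimes> y \<otimes> h \<in> U}"
        then have "h = inv (inv h)" "inv h \<in> {h \<in> carrier G. h \<otimes> y \<otimes> inv h \<in> U}" by auto
        then show "h \<in> (\<lambda>x. inv x) ` {h \<in> carrier G. h \<otimes> y \<otimes> inv h \<in> U}"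
          by (intro rev_image_eqI)
      qed
    next
      show "(\<lambda>x. inv x) ` {h \<in> carrier G. h \<otimes> y \<otimes> inv h \<in> U} \<subseteq> {h \<in> carrier G. inv h \<otimes> y \<otimes> h \<in> U}"
      proof
        fix u assume "u \<in> (\<lambda>x. inv x) ` {h \<in> carrier G. h \<otimes> y \<otimes> inv h \<in> U}"
        then obtain h where h: "h \<in> carrier G" "h \<otimes> y \<otimes> inv h \<in> U" and u: "u = inv h" by blast
        have "inv u \<otimes> y \<otimes> u \<in> U" using h u by simp
        then show "u \<in> {h \<in> carrier G. inv h \<otimes> y \<otimes> h \<in> U}" using h u by simp
      qed
    qed
    have injA: "inj_on (\<lambda>x. inv x) {h \<in> carrier G. h \<otimes> y \<otimes> inv h \<in> U}"
    proof (rule inj_onI)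
      fix u v assume u: "u \<in> {h \<in> carrier G. h \<otimes> y \<otimes> inv h \<in> U}"
        and v: "v \<in> {h \<in> carrier G. h \<otimes> y \<otimes> inv h \<in> U}" and e: "inv u = inv v"
      have "u = inv (inv u)" using u by simp
      also have "\<dots> = inv (inv v)" using e by simp
      also have "\<dots> = v" using v by simp
      finally show "u = v" .
    qed
    show ?thesis unfolding eqA using card_image[OF injA] .
  qed
  have S3: "{h \<in> carrier G. h \<otimes> y \<otimes> inv h \<in> U} = {h \<in> carrier G. h \<otimes> y \<otimes> inv h \<in> yG \<inter> U}"
    using conj_mem[OF y] unfolding yG_def by blast
  have S3': "card {h \<in> carrier G. h \<otimes> y \<otimes> inv h \<in> yG \<inter> U} = card (yG \<inter> U) * card Zy"
    unfolding Zy_def yG_def by (rule card_preimage[OF fin y]) blast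
  have finM: "finite (max_over G s)" using finite_max_over[OF fin] .
  have S4: "card (yG \<inter> U) \<le> (\<Sum>H\<in>max_over G s. card (yG \<inter> H))"
  proof -
    have "yG \<inter> U = (\<Union>H\<in>max_over G s. yG \<inter> H)" unfolding U_def by blast
    then show ?thesis using card_UN_le[OF finM] by metis
  qed
  have D_sub: "D \<subseteq> conj_class G s" unfolding D_def by blast
  have finG: "finite {h \<in> carrier G. inv h \<otimes> y \<otimes> h \<in> U}" using fin by simp
  have S0: "card {h \<in> carrier G. h \<otimes> s \<otimes> inv h \<in> D} = card D * card Zs"
    unfolding Zs_def by (rule card_preimage[OF fin s D_sub])
  have NA: "card D * card Zs \<le> card (yG \<inter> U) * card Zy"
  proof -
    have "card D * card Zs = card {h \<in> carrier G. h \<otimes> s \<otimes> inv h \<in> D}" using S0 by simp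
    also have "\<dots> \<le> card {h \<in> carrier G. inv h \<otimes> y \<otimes> h \<in> U}" using card_mono[OF finG S1] .
    also have "\<dots> = card {h \<in> carrier G. h \<otimes> y \<otimes> inv h \<in> U}" using S2 .
    also have "\<dots> = card (yG \<inter> U) * card Zy" using S3 S3' by simp
    finally show ?thesis .
  qed
  have N1: "card (carrier G) = card (conj_class G s) * card Zs"
  proof -
    have "{h \<in> carrier G. h \<otimes> s \<otimes> inv h \<in> conj_class G s} = carrier G" using conj_mem[OF s] by blast
    then show ?thesis using card_preimage[OF fin s subset_refl] unfolding Zs_def by simp
  qed
  have N2: "card (carrier G) = card yG * card Zy"
  proof -
    have "{h \<in> carrier G. h \<otimes> y \<otimes> inv h \<in> conj_class G y} = carrier G" using conj_mem[OF y] by blast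
    then show ?thesis using card_preimage[OF fin y subset_refl] unfolding Zy_def yG_def by simp
  qed
  have Npos: "card (carrier G) > 0" using fin one_closed by (auto simp: card_gt_0_iff)
  have pos1: "card (conj_class G s) > 0" "card Zs > 0" using N1 Npos by auto
  have pos2: "card yG > 0" "card Zy > 0" using N2 Npos by auto
  let ?B = "\<Sum>H\<in>max_over G s. card (yG \<inter> H)"
  have NB: "real (card D) * real (card Zs) \<le> real ?B * real (card Zy)"
  proof -
    have "card D * card Zs \<le> ?B * card Zy" using NA S4 mult_right_mono le_trans by blast
    then show ?thesis by (metis of_nat_le_iff of_nat_mult)
  qed
  have "real (card D) / real (card (conj_class G s))
        = real (card D) * real (card Zs) / real (card (carrier G))"
    using N1 pos1 by simp
  also have "\<dots> \<le> real ?B * real (card Zy) / real (card (carrier G))"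
    using NB Npos by (simp add: divide_right_mono)
  also have "\<dots> = real ?B / real (card yG)"
    using N2 pos2 by simp
  also have "\<dots> = (\<Sum>H\<in>max_over G s. fpr G y H)"
    unfolding fpr_def yG_def by (simp add: sum_divide_distrib)
  finally show ?thesis unfolding D_def .
qed

end

context group
begin

lemma main_bound:
  assumes fin0: "finite (carrier G)"
    and s0: "s \<in> carrier G" and s10: "s \<noteq> \<one>"
    and Rs: "R \<subseteq> carrier G"
    and primeR: "\<forall>x \<in> R. Factorial_Ring.prime (ord x)"
    and uniq: "\<forall>y \<in> carrier G. Factorial_Ring.prime (ord y) \<longrightarrow> (\<exists>!x. x \<in> R \<and> y \<in> conj_class G x)"
  shows "Qprob G s c \<le>
    (\<Sum>x \<in> R. real (card (conj_class G x)) * (\<Sum>H \<in> max_over G s. fpr G x H) ^ c)"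
proof -
  have fin: "finite (carrier G)" and s: "s \<in> carrier G" and s1: "s \<noteq> \<one>" using assms by auto
  define C where "C = conj_class G s"
  define P where "P = {y \<in> carrier G. Factorial_Ring.prime (ord y)}"
  define D where "D = (\<lambda>y. {z \<in> C. \<exists>K. subgroup K G \<and> K \<noteq> carrier G \<and> y \<in> K \<and> z \<in> K})"
  define F where "F = (\<lambda>y. (\<Sum>H\<in>max_over G s. fpr G y H) ^ c)"
  define B where "B = {f \<in> {..<c} \<rightarrow>\<^sub>E C. \<not> total_dominating G (f ` {..<c})}"
  have finC: "finite C" unfolding C_def using conj_class_sub[OF s] fin finite_subset by metis
  have finP: "finite P" unfolding P_def using fin by simp
  have Cnonid: "C \<subseteq> nonid G"
  proof
    fix z assume "z \<in> C"
    then obtain g where g: "g \<in> carrier G" and z: "z = g \<otimes> s \<otimes> inv g"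
      unfolding C_def conj_class_def by blast
    have "z \<noteq> \<one>"
    proof
      assume "z = \<one>"
      then have "g \<otimes> s \<otimes> inv g = g \<otimes> \<one> \<otimes> inv g" using z g by simp
      then have "s = \<one>" using conjugation_is_inj[OF g s one_closed] by blast
      then show False using s1 by simp
    qed
    then show "z \<in> nonid G" unfolding nonid_def using z g s by simp
  qed
  have Bsub: "B \<subseteq> (\<Union>y\<in>P. {..<c} \<rightarrow>\<^sub>E D y)"
  proof
    fix f assume "f \<in> B"
    then have fT: "f \<in> {..<c} \<rightarrow>\<^sub>E C" and nt: "\<not> total_dominating G (f ` {..<c})"
      unfolding B_def by auto
    have fC: "f ` {..<c} \<subseteq> C" using fT by (auto simp: PiE_iff)
    then have "f ` {..<c} \<subseteq> nonid G" using Cnonid by blast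
    then obtain g where g: "g \<in> nonid G" and gn: "\<forall>z\<in>f ` {..<c}. generate G {g, z} \<noteq> carrier G"
      using nt unfolding total_dominating_def by blast
    have gc: "g \<in> carrier G" and g1: "g \<noteq> \<one>" using g unfolding nonid_def by auto
    obtain n :: nat where pn: "Factorial_Ring.prime (ord (g [^] n))"
      using prime_order_power[OF fin gc g1] by blast
    define y where "y = g [^] n"
    have yP: "y \<in> P" unfolding P_def y_def using pn gc by simp
    have "\<forall>i\<in>{..<c}. f i \<in> D y"
    proof
      fix i assume i: "i \<in> {..<c}"
      have fiC: "f i \<in> C" using fC i by blast
      have fic: "f i \<in> carrier G" using fiC Cnonid unfolding nonid_def by blast
      let ?K = "generate G {g, f i}"
      have Ks: "subgroup ?K G" using generate_is_subgroup gc fic by simp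
      have Kn: "?K \<noteq> carrier G" using gn i by blast
      have gK: "g \<in> ?K" and fK: "f i \<in> ?K" by (auto intro: generate.incl)
      have yK: "y \<in> ?K" unfolding y_def using subgroup_pow_closed[OF Ks gK] .
      show "f i \<in> D y" unfolding D_def using fiC Ks Kn yK fK by blast
    qed
    then have "f \<in> {..<c} \<rightarrow>\<^sub>E D y" using fT by (simp add: PiE_iff)
    then show "f \<in> (\<Union>y\<in>P. {..<c} \<rightarrow>\<^sub>E D y)" using yP by blast
  qed
  have finD: "\<And>y. finite (D y)" unfolding D_def using finC by simp
  have finU: "finite (\<Union>y\<in>P. {..<c} \<rightarrow>\<^sub>E D y)" using finP finD by (simp add: finite_PiE)
  have cardB: "card B \<le> (\<Sum>y\<in>P. card (D y) ^ c)"
  proof -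
    have "card B \<le> card (\<Union>y\<in>P. {..<c} \<rightarrow>\<^sub>E D y)" using card_mono[OF finU Bsub] .
    also have "\<dots> \<le> (\<Sum>y\<in>P. card ({..<c} \<rightarrow>\<^sub>E D y))" using card_UN_le[OF finP] .
    also have "\<dots> = (\<Sum>y\<in>P. card (D y) ^ c)" by (simp add: card_PiE)
    finally show ?thesis .
  qed
  have Cpos: "card C > 0" using finC conj_class_self[OF s] unfolding C_def by (auto simp: card_gt_0_iff)
  have "Qprob G s c = real (card B) / real (card C) ^ c"
    unfolding Qprob_def B_def C_def by (simp add: card_PiE)
  also have "\<dots> \<le> real (\<Sum>y\<in>P. card (D y) ^ c) / real (card C) ^ c"
    by (rule divide_right_mono) (use cardB in \<open>simp_all only: of_nat_le_iff zero_le_power of_nat_0_le_iff\<close>)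
  also have "\<dots> = (\<Sum>y\<in>P. (real (card (D y)) / real (card C)) ^ c)"
    by (simp add: sum_divide_distrib power_divide)
  also have "\<dots> \<le> (\<Sum>y\<in>P. F y)"
  proof (rule sum_mono)
    fix y assume "y \<in> P"
    then have yc: "y \<in> carrier G" unfolding P_def by simp
    have "real (card (D y)) / real (card C) \<le> (\<Sum>H\<in>max_over G s. fpr G y H)"
      using prob_bound[OF fin s yc] unfolding D_def C_def .
    then show "(real (card (D y)) / real (card C)) ^ c \<le> F y"
      unfolding F_def by (intro power_mono) auto
  qed
  also have "\<dots> = (\<Sum>x\<in>R. real (card (conj_class G x)) * F x)"
  proof -
    have Rsub: "R \<subseteq> carrier G" using Rs by simp
    have finR: "finite R" using Rsub fin finite_subset by metis
    have Peq: "P = (\<Union>x\<in>R. conj_class G x)"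
    proof
      show "P \<subseteq> (\<Union>x\<in>R. conj_class G x)"
        using uniq unfolding P_def by blast
      show "(\<Union>x\<in>R. conj_class G x) \<subseteq> P"
      proof
        fix y assume "y \<in> (\<Union>x\<in>R. conj_class G x)"
        then obtain x where x: "x \<in> R" "y \<in> conj_class G x" by blast
        have xc: "x \<in> carrier G" using x Rsub by blast
        have "y \<in> carrier G" using conj_class_sub[OF xc] x by blast
        moreover have "ord y = ord x" using ord_conj_class[OF xc x(2)] .
        ultimately show "y \<in> P" using primeR x unfolding P_def by simp
      qed
    qed
    have disj: "\<forall>x1\<in>R. \<forall>x2\<in>R. x1 \<noteq> x2 \<longrightarrow> conj_class G x1 \<inter> conj_class G x2 = {}"
    proof (intro ballI impI)
      fix x1 x2 assume x1: "x1 \<in> R" and x2: "x2 \<in> R" and ne: "x1 \<noteq> x2"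
      show "conj_class G x1 \<inter> conj_class G x2 = {}"
      proof (rule ccontr)
        assume "conj_class G x1 \<inter> conj_class G x2 \<noteq> {}"
        then obtain y where y1: "y \<in> conj_class G x1" and y2: "y \<in> conj_class G x2" by blast
        have xc: "x1 \<in> carrier G" using x1 Rsub by blast
        have yc: "y \<in> carrier G" using conj_class_sub[OF xc] y1 by blast
        have "ord y = ord x1" using ord_conj_class[OF xc y1] .
        then have "Factorial_Ring.prime (ord y)" using primeR x1 by simp
        then have "\<exists>!x. x \<in> R \<and> y \<in> conj_class G x" using uniq yc by blast
        then show False using x1 x2 y1 y2 ne by blast
      qed
    qed
    have finCC: "\<forall>x\<in>R. finite (conj_class G x)"
      using Rsub conj_class_sub fin finite_subset by (metis subsetD)
    have "(\<Sum>y\<in>P. F y) = (\<Sum>x\<in>R. \<Sum>y\<in>conj_class G x. F y)"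
      unfolding Peq using sum.UNION_disjoint[OF finR finCC disj] .
    also have "\<dots> = (\<Sum>x\<in>R. \<Sum>y\<in>conj_class G x. F x)"
    proof (rule sum.cong[OF refl], rule sum.cong[OF refl])
      fix x y assume x: "x \<in> R" and y: "y \<in> conj_class G x"
      have xc: "x \<in> carrier G" using x Rsub by blast
      have "conj_class G y = conj_class G x" using conj_class_eq[OF xc y] .
      then have "\<And>H. fpr G y H = fpr G x H" unfolding fpr_def by simp
      then show "F y = F x" unfolding F_def by simp
    qed
    also have "\<dots> = (\<Sum>x\<in>R. real (card (conj_class G x)) * F x)" by simp
    finally show ?thesis .
  qed
  finally show ?thesis unfolding F_def .
qed


end

theorem lemma2p5:
  fixes G :: "('a, 'b) monoid_scheme" and s :: 'a and c :: nat and R :: "'a set"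
  assumes "group G" and "finite (carrier G)"
    and "s \<in> carrier G" and "s \<noteq> \<one>\<^bsub>G\<^esub>"
    and "c \<ge> 1"
    and "R \<subseteq> carrier G"
    and "\<forall>x \<in> R. Factorial_Ring.prime (group.ord G x)"
    and "\<forall>y \<in> carrier G. Factorial_Ring.prime (group.ord G y) \<longrightarrow> (\<exists>!x. x \<in> R \<and> y \<in> conj_class G x)"
  shows "Qprob G s c \<le>
    (\<Sum>x \<in> R. real (card (conj_class G x)) * (\<Sum>H \<in> max_over G s. fpr G x H) ^ c)"
  using group.main_bound[OF assms(1,2,3,4,6,7,8)] .

end
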